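(* Let $\varphi\colon G\to G$ be an endomorphism of an abelian group $G$, let $t(G)$ be the torsion subgroup of $G$, $\varphi|_{t(G)}\colon t(G)\to t(G)$ the restriction, and $S$ a finite subgroup of $G$. Then: (1) $S$ is a positive generator for $\varphi$ if and only if $\sum_{k\in\mathbb N}\varphi^kS=t(G)$; (2) $\varphi$ is positively $S$-expansive if and only if $\varphi|_{t(G)}$ is positively $S$-expansive. If moreover $\varphi$ is an automorphism, then: (3) $S$ is a generator for $\varphi$ if and only if $\sum_{k\in\mathbb Z}\varphi^kS=t(G)$; (4) $\varphi$ is $S$-expansive if and only if $\varphi|_{t(G)}$ is $S$-expansive.
   Context: $\mathbb N=\{0,1,2,\dots\}$. For an endomorphism $\varphi$ of an abelian group $G$, a finite subgroup $S\leq G$ is a positive generator (and $\varphi$ is called positively $S$-expansive) if for every finite subgroup $F\leq G$ there is $n\in\mathbb N$ with $F\subseteq\sum_{k=0}^n\varphi^kS$. For an automorphism $\varphi$, a finite subgroup $S$ is a generator (and $\varphi$ is $S$-expansive) if for every finite subgroup $F\leq G$ there is $n\in\mathbb N$ with $F\subseteq\sum_{|k|\leq n}\varphi^kS$; for negative $k$, $\varphi^k$ denotes the power of $\varphi^{-1}$. *)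

theory Defs
  imports Main
begin

text \<open>Notions for the restriction of phi to the torsion subgroup are stated
relative to a carrier H (H = UNIV gives the notions for G itself).\<close>

definition subgrp :: "'a::ab_group_add set \<Rightarrow> bool" where
  "subgrp H \<longleftrightarrow> 0 \<in> H \<and> (\<forall>x\<in>H. \<forall>y\<in>H. x + y \<in> H) \<and> (\<forall>x\<in>H. - x \<in> H)"

definition additive_endo :: "('a::ab_group_add \<Rightarrow> 'a) \<Rightarrow> bool" where
  "additive_endo \<phi> \<longleftrightarrow> (\<forall>x y. \<phi> (x + y) = \<phi> x + \<phi> y)"

definition torsion :: "'a::ab_group_add set" where
  "torsion = {x. \<exists>n::nat. n > 0 \<and> (\<Sum>i<n. x) = 0}"

definition fam_sum :: "'i set \<Rightarrow> ('i \<Rightarrow> 'a::ab_group_add set) \<Rightarrow> 'a set" where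
  "fam_sum I A = {\<Sum>k\<in>I. x k | x. \<forall>k\<in>I. x k \<in> A k}"

definition zpow :: "('a \<Rightarrow> 'a) \<Rightarrow> int \<Rightarrow> 'a \<Rightarrow> 'a" where
  "zpow \<phi> k = (if 0 \<le> k then \<phi> ^^ nat k else (inv \<phi>) ^^ nat (- k))"

definition pos_generator :: "'a::ab_group_add set \<Rightarrow> ('a \<Rightarrow> 'a) \<Rightarrow> 'a set \<Rightarrow> bool" where
  "pos_generator H \<phi> S \<longleftrightarrow> finite S \<and> subgrp S \<and> S \<subseteq> H \<and>
     (\<forall>F. finite F \<and> subgrp F \<and> F \<subseteq> H \<longrightarrow>
        (\<exists>n::nat. F \<subseteq> fam_sum {0..n} (\<lambda>k. (\<phi> ^^ k) ` S)))"

definition pos_expansive :: "'a::ab_group_add set \<Rightarrow> ('a \<Rightarrow> 'a) \<Rightarrow> 'a set \<Rightarrow> bool" where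
  "pos_expansive H \<phi> S \<longleftrightarrow> pos_generator H \<phi> S"

definition generator :: "'a::ab_group_add set \<Rightarrow> ('a \<Rightarrow> 'a) \<Rightarrow> 'a set \<Rightarrow> bool" where
  "generator H \<phi> S \<longleftrightarrow> finite S \<and> subgrp S \<and> S \<subseteq> H \<and>
     (\<forall>F. finite F \<and> subgrp F \<and> F \<subseteq> H \<longrightarrow>
        (\<exists>n::nat. F \<subseteq> fam_sum {- int n..int n} (\<lambda>k. zpow \<phi> k ` S)))"

definition expansive :: "'a::ab_group_add set \<Rightarrow> ('a \<Rightarrow> 'a) \<Rightarrow> 'a set \<Rightarrow> bool" where
  "expansive H \<phi> S \<longleftrightarrow> generator H \<phi> S"

definition nat_orbit_sum :: "('a::ab_group_add \<Rightarrow> 'a) \<Rightarrow> 'a set \<Rightarrow> 'a set" where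
  "nat_orbit_sum \<phi> S = (\<Union>n::nat. fam_sum {0..n} (\<lambda>k. (\<phi> ^^ k) ` S))"

definition int_orbit_sum :: "('a::ab_group_add \<Rightarrow> 'a) \<Rightarrow> 'a set \<Rightarrow> 'a set" where
  "int_orbit_sum \<phi> S = (\<Union>n::nat. fam_sum {- int n..int n} (\<lambda>k. zpow \<phi> k ` S))"

end

theory Submission
  imports Defs
begin

definition nsm :: "nat \<Rightarrow> 'a::ab_group_add \<Rightarrow> 'a" where
  "nsm n x = (\<Sum>i<n. x)"

lemma nsm_0[simp]: "nsm 0 x = 0" by (simp add: nsm_def)
lemma nsm_Suc: "nsm (Suc n) x = nsm n x + x" by (simp add: nsm_def)
lemma nsm_zero[simp]: "nsm n (0::'a::ab_group_add) = 0" by (simp add: nsm_def)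

lemma nsm_add: "nsm (a + b) x = nsm a x + nsm b x"
  by (induction b) (simp_all add: nsm_Suc add.assoc)

lemma nsm_mult: "nsm (n * m) x = nsm n (nsm m x)"
  by (induction n) (simp_all add: nsm_Suc nsm_add add.commute)

lemma nsm_distrib: "nsm n (x + y) = nsm n x + nsm n y"
  by (induction n) (simp_all add: nsm_Suc algebra_simps)

lemma additive_zero: "additive_endo g \<Longrightarrow> g 0 = 0"
  unfolding additive_endo_def by (metis add_cancel_right_right add_0)

lemma additive_nsm: "additive_endo g \<Longrightarrow> g (nsm n x) = nsm n (g x)"
  by (induction n) (simp_all add: nsm_Suc additive_zero, simp add: additive_endo_def)

lemma torsion_iff: "x \<in> torsion \<longleftrightarrow> (\<exists>n>0. nsm n x = 0)"
  unfolding torsion_def nsm_def by auto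

lemma torsion_0: "0 \<in> torsion"
  unfolding torsion_iff by (rule exI[of _ 1]) (simp add: nsm_def)

lemma torsion_add: assumes "x \<in> torsion" "y \<in> torsion" shows "x + y \<in> torsion"
proof -
  obtain n where n: "n > 0" "nsm n x = 0" using assms(1) torsion_iff by blast
  obtain m where m: "m > 0" "nsm m y = 0" using assms(2) torsion_iff by blast
  have "nsm (n*m) x = 0" using nsm_mult[of m n x] n(2) by (simp add: mult.commute)
  moreover have "nsm (n*m) y = 0" using nsm_mult[of n m y] m(2) by simp
  ultimately have "nsm (n*m) (x+y) = 0" by (simp add: nsm_distrib)
  with n m show ?thesis unfolding torsion_iff by (intro exI[of _ "n*m"]) simp
qed

lemma torsion_image: assumes "additive_endo g" "x \<in> torsion" shows "g x \<in> torsion"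
proof -
  obtain n where n: "n > 0" "nsm n x = 0" using assms(2) torsion_iff by blast
  have "nsm n (g x) = 0" using additive_nsm[OF assms(1), of n x] n(2) additive_zero[OF assms(1)] by simp
  with n(1) show ?thesis unfolding torsion_iff by blast
qed

lemma sum_torsion: "finite I \<Longrightarrow> (\<forall>k\<in>I. x k \<in> torsion) \<Longrightarrow> sum x I \<in> torsion"
  by (induction I rule: finite_induct) (simp_all add: torsion_0 torsion_add)

lemma subgrp_nsm: "subgrp F \<Longrightarrow> x \<in> F \<Longrightarrow> nsm n x \<in> F"
  by (induction n) (auto simp: nsm_Suc subgrp_def)

lemma finite_subgrp_torsion:
  assumes "finite F" "subgrp F" "x \<in> F" shows "x \<in> torsion"
proof -
  have "range (\<lambda>k. nsm k x) \<subseteq> F" using subgrp_nsm assms by blast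
  hence fin: "finite (range (\<lambda>k. nsm k x))" using assms(1) by (rule finite_subset)
  have "\<not> inj (\<lambda>k. nsm k x)"
  proof
    assume "inj (\<lambda>k. nsm k x)"
    then have "finite (UNIV::nat set)" using fin by (intro finite_imageD[of "\<lambda>k. nsm k x"]) (simp_all add: inj_on_def)
    thus False by simp
  qed
  then obtain i j where ij: "i \<noteq> j" "nsm i x = nsm j x" unfolding inj_def by blast
  show ?thesis
  proof (cases "i < j")
    case True
    then have "nsm j x = nsm i x + nsm (j - i) x" using nsm_add[of i "j-i" x] by simp
    with ij have "nsm (j-i) x = 0" by simp
    with True show ?thesis unfolding torsion_iff by (intro exI[of _ "j-i"]) simp
  next
    case False
    with ij have lt: "j < i" by simp
    then have "nsm i x = nsm j x + nsm (i - j) x" using nsm_add[of j "i-j" x] by simp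
    with ij have "nsm (i-j) x = 0" by simp
    with lt show ?thesis unfolding torsion_iff by (intro exI[of _ "i-j"]) simp
  qed
qed

lemma cyclic_subgrp:
  assumes "x \<in> torsion"
  shows "finite (range (\<lambda>k. nsm k x)) \<and> subgrp (range (\<lambda>k. nsm k x)) \<and> x \<in> range (\<lambda>k. nsm k x)"
proof -
  obtain n where n: "n > 0" "nsm n x = 0" using assms torsion_iff by blast
  have md: "nsm k x = nsm (k mod n) x" for k
  proof -
    have "nsm ((k div n) * n + k mod n) x = nsm ((k div n) * n) x + nsm (k mod n) x"
      by (rule nsm_add)
    thus ?thesis by (simp add: nsm_mult n)
  qed
  have "range (\<lambda>k. nsm k x) \<subseteq> (\<lambda>k. nsm k x) ` {..<n}"
  proof
    fix y assume "y \<in> range (\<lambda>k. nsm k x)"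
    then obtain k where "y = nsm k x" by auto
    then show "y \<in> (\<lambda>k. nsm k x) ` {..<n}"
      using md[of k] n(1) by (intro image_eqI[of _ _ "k mod n"]) auto
  qed
  hence fin: "finite (range (\<lambda>k. nsm k x))" by (rule finite_subset) simp
  have neg: "- nsm k x = nsm (k * (n - 1)) x" for k
  proof -
    have e: "k + k * (n - 1) = k * n" using n(1) by (cases n) auto
    have "nsm k x + nsm (k * (n - 1)) x = nsm (k * n) x"
      by (simp only: nsm_add[symmetric] e)
    also have "\<dots> = 0" by (simp only: nsm_mult n(2) nsm_zero)
    finally show ?thesis by (simp add: neg_eq_iff_add_eq_0)
  qed
  have z: "0 \<in> range (\<lambda>k. nsm k x)" by (rule image_eqI[of _ _ 0]) simp_all
  have a: "y + z \<in> range (\<lambda>k. nsm k x)" if yz: "y \<in> range (\<lambda>k. nsm k x)" "z \<in> range (\<lambda>k. nsm k x)" for y z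
  proof -
    obtain i j where "y = nsm i x" "z = nsm j x" using yz by blast
    then have "y + z = nsm (i + j) x" by (simp add: nsm_add)
    then show ?thesis by blast
  qed
  have m: "- y \<in> range (\<lambda>k. nsm k x)" if yr: "y \<in> range (\<lambda>k. nsm k x)" for y
  proof -
    obtain i where "y = nsm i x" using yr by blast
    then have "- y = nsm (i * (n - 1)) x" by (simp add: neg)
    then show ?thesis by blast
  qed
  have "subgrp (range (\<lambda>k. nsm k x))"
    unfolding subgrp_def using z a m by blast
  moreover have "x \<in> range (\<lambda>k. nsm k x)" by (rule image_eqI[of _ _ 1]) (simp_all add: nsm_def)
  ultimately show ?thesis using fin by blast
qed

lemma fam_sum_mono:
  assumes "finite J" "I \<subseteq> J" "\<forall>k\<in>J - I. 0 \<in> A k"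
  shows "fam_sum I A \<subseteq> fam_sum J A"
proof
  fix z assume "z \<in> fam_sum I A"
  then obtain x where x: "z = (\<Sum>k\<in>I. x k)" "\<forall>k\<in>I. x k \<in> A k" unfolding fam_sum_def by blast
  define y where "y k = (if k \<in> I then x k else 0)" for k
  have "(\<Sum>k\<in>J. y k) = (\<Sum>k\<in>I. y k)"
    using assms by (intro sum.mono_neutral_right) (auto simp: y_def)
  also have "\<dots> = z" using x by (simp add: y_def)
  finally have "z = (\<Sum>k\<in>J. y k)" by simp
  moreover have "\<forall>k\<in>J. y k \<in> A k" using x assms(3) by (auto simp: y_def)
  ultimately show "z \<in> fam_sum J A" unfolding fam_sum_def by blast
qed

lemma fam_sum_torsion:
  assumes "finite I" "\<forall>k\<in>I. A k \<subseteq> torsion"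
  shows "fam_sum I A \<subseteq> torsion"
  using assms sum_torsion unfolding fam_sum_def by blast

lemma finite_in_union:
  assumes mono: "\<And>n m. n \<le> m \<Longrightarrow> Q n \<subseteq> Q m" and "finite F" "F \<subseteq> (\<Union>n. Q n)"
  shows "\<exists>n::nat. F \<subseteq> Q n"
  using assms(2,3)
proof (induction F rule: finite_induct)
  case empty then show ?case by simp
next
  case (insert x F)
  then obtain a where a: "x \<in> Q a" by blast
  from insert obtain b where b: "F \<subseteq> Q b" by blast
  have "x \<in> Q (max a b)" "F \<subseteq> Q (max a b)" using a b mono[of a "max a b"] mono[of b "max a b"] by auto
  then show ?case by blast
qed

lemma additive_funpow: "additive_endo g \<Longrightarrow> additive_endo (g ^^ k)"
  by (induction k) (simp_all add: additive_endo_def)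

lemma additive_inv: assumes "additive_endo g" "bij g" shows "additive_endo (inv g)"
  unfolding additive_endo_def
proof (intro allI)
  fix x y
  have "g (inv g x + inv g y) = x + y"
    using assms by (simp add: additive_endo_def bij_is_surj surj_f_inv_f)
  also have "\<dots> = g (inv g (x + y))" using assms by (simp add: bij_is_surj surj_f_inv_f)
  finally show "inv g (x + y) = inv g x + inv g y"
    using assms(2) bij_is_inj injD by metis
qed

lemma additive_zpow: "additive_endo g \<Longrightarrow> bij g \<Longrightarrow> additive_endo (zpow g k)"
  unfolding zpow_def by (simp add: additive_funpow additive_inv)

lemma image_torsion_sub:
  assumes "additive_endo g" "finite S" "subgrp S" shows "g ` S \<subseteq> torsion" "0 \<in> g ` S"
proof -
  show "g ` S \<subseteq> torsion"
  proof
    fix y assume "y \<in> g ` S"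
    then obtain s where "s \<in> S" "y = g s" by blast
    then show "y \<in> torsion" using assms finite_subgrp_torsion torsion_image by blast
  qed
  have "0 \<in> S" using assms(3) unfolding subgrp_def by blast
  then show "0 \<in> g ` S" using additive_zero[OF assms(1)] by (metis image_eqI)
qed

lemma finite_subgrp_sub_torsion: "finite F \<Longrightarrow> subgrp F \<Longrightarrow> F \<subseteq> torsion"
  using finite_subgrp_torsion by blast

lemma general:
  fixes Q :: "nat \<Rightarrow> 'a::ab_group_add set"
  assumes mono: "\<And>n m. n \<le> m \<Longrightarrow> Q n \<subseteq> Q m" and tor: "\<And>n. Q n \<subseteq> torsion"
  shows "(\<forall>F. finite F \<and> subgrp F \<longrightarrow> (\<exists>n. F \<subseteq> Q n)) \<longleftrightarrow> (\<Union>n. Q n) = torsion"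
proof
  assume H: "\<forall>F. finite F \<and> subgrp F \<longrightarrow> (\<exists>n. F \<subseteq> Q n)"
  show "(\<Union>n. Q n) = torsion"
  proof
    show "(\<Union>n. Q n) \<subseteq> torsion" using tor by blast
    show "torsion \<subseteq> (\<Union>n. Q n)"
    proof
      fix x :: 'a assume "x \<in> torsion"
      from cyclic_subgrp[OF this] H obtain n where "range (\<lambda>k. nsm k x) \<subseteq> Q n" by blast
      then show "x \<in> (\<Union>n. Q n)" using cyclic_subgrp[OF \<open>x \<in> torsion\<close>] by blast
    qed
  qed
next
  assume E: "(\<Union>n. Q n) = torsion"
  show "\<forall>F. finite F \<and> subgrp F \<longrightarrow> (\<exists>n. F \<subseteq> Q n)"
  proof (intro allI impI)
    fix F :: "'a set" assume "finite F \<and> subgrp F"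
    then have "F \<subseteq> (\<Union>n. Q n)" using E finite_subgrp_sub_torsion[of F] by simp
    then show "\<exists>n. F \<subseteq> Q n" using finite_in_union[OF mono] \<open>finite F \<and> subgrp F\<close> by simp
  qed
qed

theorem proposition2p2:
  fixes \<phi> :: "'a::ab_group_add \<Rightarrow> 'a" and S :: "'a set"
  assumes endo: "additive_endo \<phi>"
    and finS: "finite S" and subS: "subgrp S"
  shows "(pos_generator UNIV \<phi> S \<longleftrightarrow> nat_orbit_sum \<phi> S = torsion)
       \<and> (pos_expansive UNIV \<phi> S \<longleftrightarrow> pos_expansive torsion \<phi> S)
       \<and> (bij \<phi> \<longrightarrow>
            (generator UNIV \<phi> S \<longleftrightarrow> int_orbit_sum \<phi> S = torsion)
          \<and> (expansive UNIV \<phi> S \<longleftrightarrow> expansive torsion \<phi> S))"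
proof -
  have Stor: "S \<subseteq> torsion" using finS subS by (rule finite_subgrp_sub_torsion)
  have key: "\<And>F. (finite F \<and> subgrp F \<and> F \<subseteq> torsion) = (finite F \<and> subgrp F \<and> F \<subseteq> UNIV)"
    using finite_subgrp_sub_torsion by blast
  define P where "P n = fam_sum {0..n} (\<lambda>k. (\<phi> ^^ k) ` S)" for n
  have Pmono: "P n \<subseteq> P m" if "n \<le> m" for n m
    unfolding P_def using that image_torsion_sub(2)[OF additive_funpow[OF endo] finS subS]
    by (intro fam_sum_mono) auto
  have Ptor: "P n \<subseteq> torsion" for n
    unfolding P_def using image_torsion_sub(1)[OF additive_funpow[OF endo] finS subS]
    by (intro fam_sum_torsion) auto
  have 1: "pos_generator UNIV \<phi> S \<longleftrightarrow> nat_orbit_sum \<phi> S = torsion"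
    using general[OF Pmono Ptor] finS subS
    unfolding pos_generator_def nat_orbit_sum_def P_def by simp
  have 2: "pos_expansive UNIV \<phi> S \<longleftrightarrow> pos_expansive torsion \<phi> S"
    unfolding pos_expansive_def pos_generator_def by (simp only: key) (simp add: Stor)
  have 3: "generator UNIV \<phi> S \<longleftrightarrow> int_orbit_sum \<phi> S = torsion" if bj: "bij \<phi>"
  proof -
    define Q where "Q n = fam_sum {- int n..int n} (\<lambda>k. zpow \<phi> k ` S)" for n
    have Qmono: "Q n \<subseteq> Q m" if "n \<le> m" for n m
      unfolding Q_def using that image_torsion_sub(2)[OF additive_zpow[OF endo bj] finS subS]
      by (intro fam_sum_mono) auto
    have Qtor: "Q n \<subseteq> torsion" for n
      unfolding Q_def using image_torsion_sub(1)[OF additive_zpow[OF endo bj] finS subS]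
      by (intro fam_sum_torsion) auto
    show ?thesis
      using general[OF Qmono Qtor] finS subS
      unfolding generator_def int_orbit_sum_def Q_def by simp
  qed
  have 4: "expansive UNIV \<phi> S \<longleftrightarrow> expansive torsion \<phi> S"
    unfolding expansive_def generator_def by (simp only: key) (simp add: Stor)
  show ?thesis using 1 2 3 4 by blast
qed

end
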